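(* For every $n\ge1$, $$\Psi_n=\sum_{I\vDash n}(-1)^{\ell(I)-1}V_I,$$ the sum over all compositions $I$ of $n$, $\ell(I)$ denoting the number of parts.
   Context: Permutations are words. A word $a_1\cdots a_m$ is initially dominated if $a_1>a_j$ for all $j\ge2$; every permutation factors uniquely as $\sigma=u_1\cdots u_r$ into initially dominated words with increasing first letters, and $\mathrm{SC}(\sigma)=(|u_1|,\ldots,|u_r|)$. For a composition $I$ of $n$ with descent set $\mathrm{Des}(I)=\{i_1,\ldots,i_1+\cdots+i_{r-1}\}$, $\overline{I}^{\sim}$ is the composition of $n$ with descent set $\{1,\ldots,n-1\}\setminus\mathrm{Des}(I)$. $\mathrm{RC}(\sigma)$ is the composition with descent set $\{i: i+1\text{ is left of } i\text{ in }\sigma\}$. In $QSym$ (fundamental basis $F_I$) let $U_J=\sum_{\mathrm{SC}(\sigma)=\overline{J}^{\sim}}F_{\mathrm{RC}(\sigma)}$, a basis. $\mathbf{Sym}$ is the algebra of noncommutative symmetric functions with ribbon basis $R_I$, dual to $QSym$ via $\langle F_I,R_J\rangle=\delta_{IJ}$; $(V_I)$ is the basis dual to $(U_I)$. $\Psi_n$ is the noncommutative power sum of the first kind, $\Psi_n=\sum_{k=0}^{n-1}(-1)^kR_{1^k,n-k}$. *)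

theory Defs
  imports Main "HOL-Combinatorics.Multiset_Permutations"
begin

definition comps :: "nat \<Rightarrow> nat list set" where
  "comps n = {I. sum_list I = n \<and> 0 \<notin> set I}"

definition perms :: "nat \<Rightarrow> nat list set" where
  "perms n = permutations_of_set {1..n}"

definition init_dom :: "nat list \<Rightarrow> bool" where
  "init_dom u \<longleftrightarrow> u \<noteq> [] \<and> (\<forall>j. 1 \<le> j \<and> j < length u \<longrightarrow> u ! j < u ! 0)"

definition SC :: "nat list \<Rightarrow> nat list" where
  "SC \<sigma> = map length (THE us. concat us = \<sigma> \<and> (\<forall>u\<in>set us. init_dom u)
                               \<and> sorted_wrt (<) (map hd us))"

definition des :: "nat list \<Rightarrow> nat set" where
  "des I = {sum_list (take k I) | k. 1 \<le> k \<and> k < length I}"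

definition comp_of_des :: "nat \<Rightarrow> nat set \<Rightarrow> nat list" where
  "comp_of_des n D = (let bs = 0 # sorted_list_of_set D @ [n]
                      in map (\<lambda>i. bs ! (i+1) - bs ! i) [0..<card D + 1])"

definition compl_comp :: "nat \<Rightarrow> nat list \<Rightarrow> nat list" where
  "compl_comp n I = comp_of_des n ({1..<n} - des I)"

definition RC :: "nat \<Rightarrow> nat list \<Rightarrow> nat list" where
  "RC n \<sigma> = comp_of_des n {i \<in> {1..<n}. \<exists>j k. j < k \<and> k < length \<sigma> \<and> \<sigma> ! j = i + 1 \<and> \<sigma> ! k = i}"

(* Homogeneous elements of degree n of QSym (resp. Sym) are represented by
   their coefficient functions in the fundamental basis F_K (resp. ribbon basis R_K),
   supported on comps n. *)

definition U :: "nat \<Rightarrow> nat list \<Rightarrow> nat list \<Rightarrow> rat" where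
  "U n J = (\<lambda>K. of_nat (card {\<sigma> \<in> perms n. SC \<sigma> = compl_comp n J \<and> RC n \<sigma> = K}))"

(* duality pairing <F_I, R_J> = delta_{IJ} in degree n *)
definition pair :: "nat \<Rightarrow> (nat list \<Rightarrow> rat) \<Rightarrow> (nat list \<Rightarrow> rat) \<Rightarrow> rat" where
  "pair n f g = (\<Sum>K\<in>comps n. f K * g K)"

definition V :: "nat \<Rightarrow> nat list \<Rightarrow> nat list \<Rightarrow> rat" where
  "V n I = (THE v. (\<forall>K. K \<notin> comps n \<longrightarrow> v K = 0) \<and>
                  (\<forall>J\<in>comps n. pair n (U n J) v = (if J = I then 1 else 0)))"

definition Psi :: "nat \<Rightarrow> nat list \<Rightarrow> rat" where
  "Psi n = (\<lambda>K. \<Sum>k<n. (-1)^k * (if K = replicate k 1 @ [n - k] then 1 else 0))"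

end

theory Submission
  imports Defs
begin


lemma des_Cons: "des (a # I) = (if I = [] then {} else insert a ((+) a ` des I))"
proof (cases "I = []")
  case True then show ?thesis by (simp add: des_def)
next
  case False
  have "des (a # I) = {sum_list (take k (a # I)) | k. 1 \<le> k \<and> k < Suc (length I)}"
    by (simp add: des_def)
  also have "\<dots> = insert a ((+) a ` des I)"
  proof (rule set_eqI, rule iffI)
    fix x assume "x \<in> {sum_list (take k (a # I)) | k. 1 \<le> k \<and> k < Suc (length I)}"
    then obtain k where k: "1 \<le> k" "k < Suc (length I)" "x = sum_list (take k (a # I))" by auto
    show "x \<in> insert a ((+) a ` des I)"
    proof (cases "k = 1")
      case True then show ?thesis using k by simp
    next
      case False
      then obtain k' where "k = Suc k'" "1 \<le> k'" using k by (cases k) auto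
      then show ?thesis using k unfolding des_def by auto
    qed
  next
    fix x assume "x \<in> insert a ((+) a ` des I)"
    then show "x \<in> {sum_list (take k (a # I)) | k. 1 \<le> k \<and> k < Suc (length I)}"
    proof
      assume "x = a" then show ?thesis using False
        by (auto intro!: exI[of _ 1])
    next
      assume "x \<in> (+) a ` des I"
      then obtain k where "1 \<le> k" "k < length I" "x = a + sum_list (take k I)"
        unfolding des_def by auto
      then show ?thesis by (auto intro!: exI[of _ "Suc k"])
    qed
  qed
  finally show ?thesis using False by simp
qed

lemma des_Nil[simp]: "des [] = {}" by (simp add: des_def)

lemma des_snoc: "des (C @ [c]) = des C \<union> (if C = [] then {} else {sum_list C})"
proof -
  have "des (C @ [c]) = {sum_list (take k (C @ [c])) | k. 1 \<le> k \<and> k < Suc (length C)}"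
    by (simp add: des_def)
  also have "\<dots> = {sum_list (take k C) | k. 1 \<le> k \<and> k < Suc (length C)}"
  proof -
    have h: "\<And>k. k < Suc (length C) \<Longrightarrow> take k (C @ [c]) = take k C" by simp
    show ?thesis by (rule Collect_cong, rule ex_cong1, use h in auto)
  qed
  also have "\<dots> = des C \<union> (if C = [] then {} else {sum_list C})"
    unfolding des_def by (auto simp: less_Suc_eq Suc_le_eq) (rule exI[of _ "length C"], auto)
  finally show ?thesis .
qed

lemma des_subset: "0 \<notin> set I \<Longrightarrow> des I \<subseteq> {1..<sum_list I}"
proof (induction I)
  case Nil then show ?case by simp
next
  case (Cons a I)
  then show ?case
    by (cases "I = []") (auto simp: des_Cons, (cases I; auto)+)
qed

lemma card_des: "0 \<notin> set I \<Longrightarrow> card (des I) = length I - 1"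
proof (induction I)
  case Nil then show ?case by simp
next
  case (Cons a I)
  show ?case
  proof (cases "I = []")
    case True then show ?thesis by (simp add: des_Cons)
  next
    case False
    have fin: "finite (des I)" using des_subset[of I] Cons.prems finite_subset by auto
    have "a \<notin> (+) a ` des I" using des_subset[of I] Cons.prems by auto
    then have "card (des (a # I)) = Suc (card ((+) a ` des I))"
      using False fin by (simp add: des_Cons)
    also have "\<dots> = Suc (card (des I))" by (simp add: card_image)
    finally show ?thesis using Cons False by (cases I) auto
  qed
qed

lemma comps_iff: "I \<in> comps n \<longleftrightarrow> sum_list I = n \<and> 0 \<notin> set I"
  by (simp add: comps_def)

lemma des_inj: "I \<in> comps n \<Longrightarrow> I' \<in> comps n \<Longrightarrow> des I = des I' \<Longrightarrow> I = I'"
proof (induction I arbitrary: n I')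
  case Nil
  then show ?case by (cases I') (auto simp: comps_iff)
next
  case (Cons a I)
  obtain a' J where I': "I' = a' # J" using Cons.prems by (cases I') (auto simp: comps_iff)
  have ds: "des I \<subseteq> {1..<sum_list I}" "des J \<subseteq> {1..<sum_list J}"
    using des_subset Cons.prems I' by (auto simp: comps_iff)
  show ?case
  proof (cases "I = []")
    case True
    then have "des I' = {}" using Cons.prems by (simp add: des_Cons)
    then have "J = []" using I' by (auto simp: des_Cons split: if_splits)
    then show ?thesis using True Cons.prems I' by (simp add: comps_iff)
  next
    case False
    then have "J \<noteq> []" using Cons.prems I' by (auto simp: des_Cons split: if_splits)
    have e: "insert a ((+) a ` des I) = insert a' ((+) a' ` des J)"
      using Cons.prems I' False \<open>J \<noteq> []\<close> by (simp add: des_Cons)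
    have "a = a'"
    proof (rule ccontr)
      assume "a \<noteq> a'"
      then have "a \<in> (+) a' ` des J" using e by (metis insertE insertI1)
      moreover have "a' \<in> (+) a ` des I" using e \<open>a \<noteq> a'\<close> by (metis insertE insertI1)
      ultimately show False using ds by auto
    qed
    have n1: "a \<notin> (+) a ` des I" "a \<notin> (+) a ` des J" using ds by auto
    have "(+) a ` des I = (+) a ` des J"
      using e \<open>a = a'\<close> n1 by (metis Diff_insert_absorb)
    then have "des I = des J" by (simp add: inj_image_eq_iff)
    moreover have "I \<in> comps (n - a)" "J \<in> comps (n - a)"
      using Cons.prems I' \<open>a = a'\<close> by (auto simp: comps_iff)
    ultimately show ?thesis using Cons.IH I' \<open>a = a'\<close> by blast
  qed
qed



lemma sum_take_map_upt:
  fixes bs :: "nat list"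
  assumes "\<And>i. i < N \<Longrightarrow> bs ! i \<le> bs ! Suc i" "k \<le> N"
  shows "sum_list (take k (map (\<lambda>i. bs ! (i+1) - bs ! i) [0..<N])) = bs ! k - bs ! 0"
  using assms(2)
proof (induction k)
  case 0 then show ?case by simp
next
  case (Suc k)
  have "take (Suc k) (map (\<lambda>i. bs ! (i+1) - bs ! i) [0..<N]) = map (\<lambda>i. bs ! (i+1) - bs ! i) [0..<Suc k]"
    using Suc.prems by (simp add: take_map)
  moreover have "take k (map (\<lambda>i. bs ! (i+1) - bs ! i) [0..<N]) = map (\<lambda>i. bs ! (i+1) - bs ! i) [0..<k]"
    using Suc.prems by (simp add: take_map)
  moreover have mono: "bs ! 0 \<le> bs ! k"
  proof -
    have "\<forall>j. j \<le> k \<longrightarrow> bs ! 0 \<le> bs ! j"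
    proof (intro allI impI)
      fix j assume "j \<le> k" then show "bs ! 0 \<le> bs ! j"
        using Suc.prems
      proof (induction j)
        case (Suc j) then show ?case using assms(1)[of j] by simp
      qed simp
    qed
    then show ?thesis by simp
  qed
  ultimately show ?case using Suc assms(1)[of k] by simp
qed

lemma comp_of_des:
  assumes D: "D \<subseteq> {1..<n}" and n: "n \<ge> 1"
  shows "comp_of_des n D \<in> comps n" "des (comp_of_des n D) = D"
proof -
  have fin: "finite D" using D finite_subset by blast
  define xs where "xs = sorted_list_of_set D"
  define m where "m = card D"
  define bs where "bs = 0 # xs @ [n]"
  have lxs: "length xs = m" using fin by (simp add: xs_def m_def)
  have sxs: "set xs = D" "sorted_wrt (<) xs" using fin by (simp_all add: xs_def)
  have sbs: "sorted_wrt (<) bs"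
    using D n sxs by (auto simp: bs_def sorted_wrt_append)
  have lbs: "length bs = m + 2" using lxs by (simp add: bs_def)
  have lt: "\<And>i j. i < j \<Longrightarrow> j < m+2 \<Longrightarrow> bs ! i < bs ! j"
    using sbs lbs by (simp add: sorted_wrt_iff_nth_less)
  have C: "comp_of_des n D = map (\<lambda>i. bs ! (i+1) - bs ! i) [0..<m+1]"
    by (simp add: comp_of_des_def Let_def bs_def xs_def m_def)
  have ps: "\<And>k. k \<le> m+1 \<Longrightarrow> sum_list (take k (comp_of_des n D)) = bs ! k"
  proof -
    fix k assume k: "k \<le> m+1"
    have b0: "bs ! 0 = 0" by (simp add: bs_def)
    show "sum_list (take k (comp_of_des n D)) = bs ! k"
      unfolding C using k by (subst sum_take_map_upt) (auto simp: b0 intro!: less_imp_le lt)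
  qed
  have "sum_list (comp_of_des n D) = bs ! (m+1)"
    using ps[of "m+1"] by (simp add: C)
  also have "\<dots> = n" using lxs by (simp add: bs_def nth_append)
  finally have s: "sum_list (comp_of_des n D) = n" .
  have z: "0 \<notin> set (comp_of_des n D)"
  proof
    assume "0 \<in> set (comp_of_des n D)"
    then have "\<exists>i\<in>{0..<m+1}. 0 = bs ! (i+1) - bs ! i" unfolding C by (simp only: set_map set_upt image_iff)
    then obtain i where "i < m+1" "0 = bs ! (i+1) - bs ! i" by auto
    with lt[of i "i+1"] show False by simp
  qed
  show "comp_of_des n D \<in> comps n" using s z by (simp add: comps_iff)
  have lC: "length (comp_of_des n D) = m + 1" by (simp add: C)
  have "des (comp_of_des n D) = {bs ! k | k. 1 \<le> k \<and> k < m + 1}"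
    unfolding des_def lC by (rule Collect_cong, rule ex_cong1, use ps in auto)
  also have "\<dots> = {xs ! k | k. k < m}"
  proof (rule set_eqI, rule iffI)
    fix x assume "x \<in> {bs ! k | k. 1 \<le> k \<and> k < m + 1}"
    then obtain k where "1 \<le> k" "k < m+1" "x = bs ! k" by auto
    then show "x \<in> {xs ! k | k. k < m}" using lxs
      by (auto simp: bs_def nth_append intro!: exI[of _ "k - 1"] split: nat.splits)
  next
    fix x assume "x \<in> {xs ! k | k. k < m}"
    then obtain k where "k < m" "x = xs ! k" by auto
    then show "x \<in> {bs ! k | k. 1 \<le> k \<and> k < m + 1}" using lxs
      by (auto simp: bs_def nth_append intro!: exI[of _ "Suc k"])
  qed
  also have "\<dots> = set xs" using lxs by (auto simp: in_set_conv_nth)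
  finally show "des (comp_of_des n D) = D" using sxs by simp
qed

lemma des_hook: "0 < m \<Longrightarrow> des (replicate k 1 @ [m]) = {1..k}"
proof (induction k)
  case 0 then show ?case by (simp add: des_def)
next
  case (Suc k)
  have "des (replicate (Suc k) 1 @ [m]) = insert 1 ((+) 1 ` {1..k})"
    using Suc by (simp add: des_Cons)
  also have "\<dots> = {1..Suc k}"
    by (auto simp: image_iff)
  finally show ?case .
qed

lemma hook_comps: "k < n \<Longrightarrow> replicate k 1 @ [n - k] \<in> comps n"
  by (auto simp: comps_iff sum_list_replicate)

lemma length_le_sum: "0 \<notin> set I \<Longrightarrow> length I \<le> sum_list I"
  by (induction I) auto

lemma finite_comps: "finite (comps n)"
proof -
  have "comps n \<subseteq> {xs. set xs \<subseteq> {0..n} \<and> length xs \<le> n}"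
    using length_le_sum member_le_sum_list by (fastforce simp: comps_iff)
  then show ?thesis using finite_lists_length_le[of "{0..n}" n] finite_subset by blast
qed



definition lrset :: "nat list \<Rightarrow> nat set" where
  "lrset s = {p. 1 \<le> p \<and> p < length s \<and> (\<forall>q<p. s!q < s!p)}"

definition NLR :: "nat list \<Rightarrow> nat set" where
  "NLR s = {1..<length s} - lrset s"

definition bef :: "nat list \<Rightarrow> nat \<Rightarrow> nat \<Rightarrow> bool" where
  "bef s a b \<longleftrightarrow> (\<exists>j k. j < k \<and> k < length s \<and> s!j = a \<and> s!k = b)"

definition RD :: "nat \<Rightarrow> nat list \<Rightarrow> nat set" where
  "RD n s = {i \<in> {1..<n}. bef s (i+1) i}"

lemma RC_RD: "RC n s = comp_of_des n (RD n s)"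
  by (simp add: RC_def RD_def bef_def)

lemma RD_sub: "RD n s \<subseteq> {1..<n}" by (auto simp: RD_def)
lemma lrset_sub: "lrset s \<subseteq> {1..<length s}" by (auto simp: lrset_def)

definition good :: "nat list list \<Rightarrow> bool" where
  "good us \<longleftrightarrow> (\<forall>u\<in>set us. init_dom u) \<and> sorted_wrt (<) (map hd us)"

lemma good_Nil[simp]: "good []" by (simp add: good_def)

lemma good_snoc: "good (us @ [u]) \<longleftrightarrow> good us \<and> init_dom u \<and> (\<forall>v\<in>set us. hd v < hd u)"
  by (auto simp: good_def sorted_wrt_append)

lemma init_dom_le: "init_dom u \<Longrightarrow> x \<in> set u \<Longrightarrow> x \<le> hd u"
proof -
  assume u: "init_dom u" "x \<in> set u"
  then obtain j where j: "j < length u" "u ! j = x" by (auto simp: in_set_conv_nth)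
  show "x \<le> hd u"
  proof (cases j)
    case 0 then show ?thesis using j u by (simp add: hd_conv_nth init_dom_def)
  next
    case (Suc j')
    have "\<forall>j. 1 \<le> j \<and> j < length u \<longrightarrow> u ! j < u ! 0" using u(1) by (simp add: init_dom_def)
    moreover have "1 \<le> j \<and> j < length u" using j Suc by simp
    ultimately have "u ! j < u ! 0" by blast
    moreover have "u \<noteq> []" using j by auto
    ultimately show ?thesis using j by (simp add: hd_conv_nth)
  qed
qed

lemma good_max: "good us \<Longrightarrow> us \<noteq> [] \<Longrightarrow> x \<in> set (concat us) \<Longrightarrow> x \<le> hd (last us)"
proof (induction us arbitrary: x rule: rev_induct)
  case Nil then show ?case by simp
next
  case (snoc u us)
  have g: "good us" "init_dom u" "\<forall>v\<in>set us. hd v < hd u" using snoc.prems good_snoc by auto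
  show ?case
  proof (cases "x \<in> set u")
    case True then show ?thesis using init_dom_le g by simp
  next
    case False
    then have "us \<noteq> []" "x \<in> set (concat us)" using snoc.prems by auto
    then have "x \<le> hd (last us)" using snoc.IH g by blast
    also have "hd (last us) < hd u" using g \<open>us \<noteq> []\<close> by simp
    finally show ?thesis by simp
  qed
qed

lemma lrset_snoc_block:
  assumes "init_dom u" "\<forall>a\<in>set xs. a < hd u"
  shows "lrset (xs @ u) = lrset xs \<union> (if xs = [] then {} else {length xs})"
proof (rule set_eqI)
  fix p
  have u0: "u \<noteq> []" "hd u = u ! 0" using assms(1) by (auto simp: init_dom_def hd_conv_nth)
  show "p \<in> lrset (xs @ u) \<longleftrightarrow> p \<in> lrset xs \<union> (if xs = [] then {} else {length xs})"
  proof (cases "p < length xs")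
    case True
    then show ?thesis by (auto simp: lrset_def nth_append)
  next
    case False
    then obtain r where r: "p = length xs + r" using le_Suc_ex not_less by blast
    show ?thesis
    proof (cases r)
      case 0
      have "\<forall>q<p. (xs @ u) ! q < (xs @ u) ! p"
        using r 0 assms(2) u0 by (auto simp: nth_append)
      then show ?thesis using r 0 u0 by (auto simp: lrset_def Suc_le_eq)
    next
      case (Suc r')
      have "p \<notin> lrset (xs @ u)"
      proof
        assume pl: "p \<in> lrset (xs @ u)"
        then have "r < length u" using r by (simp add: lrset_def)
        have "\<forall>j. 1 \<le> j \<and> j < length u \<longrightarrow> u ! j < u ! 0" using assms(1) by (simp add: init_dom_def)
        then have "u ! r < u ! 0" using \<open>r < length u\<close> Suc by simp
        moreover have "(xs @ u) ! length xs < (xs @ u) ! p" using pl r Suc by (simp add: lrset_def)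
        ultimately show False using r by (simp add: nth_append)
      qed
      then show ?thesis using r Suc by (auto simp: lrset_def)
    qed
  qed
qed

lemma good_des: "good us \<Longrightarrow> des (map length us) = lrset (concat us)"
proof (induction us rule: rev_induct)
  case Nil then show ?case by (simp add: lrset_def)
next
  case (snoc u us)
  have g: "good us" "init_dom u" "\<forall>v\<in>set us. hd v < hd u" using snoc.prems good_snoc by auto
  have ne: "\<forall>v\<in>set us. v \<noteq> []" using g(1) by (auto simp: good_def init_dom_def)
  have "\<forall>a\<in>set (concat us). a < hd u"
  proof
    fix a assume a: "a \<in> set (concat us)"
    then have "us \<noteq> []" by auto
    have "a \<le> hd (last us)" by (rule good_max[OF g(1) \<open>us \<noteq> []\<close> a])
    moreover have "hd (last us) < hd u" using g(3) \<open>us \<noteq> []\<close> by simp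
    ultimately show "a < hd u" by simp
  qed
  then have l: "lrset (concat us @ u) = lrset (concat us) \<union> (if concat us = [] then {} else {length (concat us)})"
    using lrset_snoc_block g(2) by blast
  have "concat us = [] \<longleftrightarrow> us = []" using ne by auto
  then show ?case using l snoc.IH g(1) by (simp add: des_snoc length_concat)
qed

lemma good_exists: "distinct s \<Longrightarrow> \<exists>us. concat us = s \<and> good us"
proof (induction s rule: rev_induct)
  case Nil then show ?case by (intro exI[of _ "[]"]) simp
next
  case (snoc x xs)
  then obtain us where us: "concat us = xs" "good us" by auto
  have xn: "x \<notin> set xs" using snoc.prems by simp
  show ?case
  proof (cases "us = []")
    case True
    then show ?thesis using us by (intro exI[of _ "[[x]]"]) (simp add: good_def init_dom_def)
  next
    case False
    have ne: "\<forall>v\<in>set us. v \<noteq> []" using us(2) by (auto simp: good_def init_dom_def)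
    have "last us \<in> set us" using False by simp
    then have "hd (last us) \<in> set (last us)" using ne by simp
    then have hl: "hd (last us) \<in> set xs" using us(1) \<open>last us \<in> set us\<close> by auto
    show ?thesis
    proof (cases "hd (last us) < x")
      case True
      have "good (us @ [[x]])"
        unfolding good_snoc
      proof (intro conjI ballI)
        show "good us" by fact
        show "init_dom [x]" by (simp add: init_dom_def)
        fix v assume "v \<in> set us"
        then have "hd v \<in> set xs" using ne us(1) by (auto intro!: bexI[of _ v])
        then show "hd v < hd [x]" using good_max[OF us(2) False] us(1) True by fastforce
      qed
      then show ?thesis using us by (intro exI[of _ "us @ [[x]]"]) simp
    next
      case False2: False
      then have lt: "x < hd (last us)" using hl xn by (metis linorder_neqE_nat)
      obtain vs u where vs: "us = vs @ [u]" using False by (metis rev_exhaust)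
      have gv: "good vs" "init_dom u" "\<forall>v\<in>set vs. hd v < hd u" using us(2) vs good_snoc by auto
      have u0: "u \<noteq> []" using gv(2) by (simp add: init_dom_def)
      have "init_dom (u @ [x])"
        using gv(2) lt vs u0 by (auto simp: init_dom_def nth_append hd_conv_nth)
      moreover have "hd (u @ [x]) = hd u" using u0 by simp
      ultimately have "good (vs @ [u @ [x]])" using gv good_snoc by auto
      then show ?thesis using us vs by (intro exI[of _ "vs @ [u @ [x]]"]) simp
    qed
  qed
qed

lemma concat_len_eq: "concat us = concat vs \<Longrightarrow> map length us = map length vs \<Longrightarrow> us = vs"
proof (induction us arbitrary: vs)
  case Nil then show ?case by simp
next
  case (Cons u us)
  then obtain v vs' where "vs = v # vs'" by (cases vs) auto
  then show ?case using Cons by auto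
qed

lemma good_comps: "good us \<Longrightarrow> map length us \<in> comps (length (concat us))"
  by (auto simp: comps_iff good_def init_dom_def length_concat)

lemma SC_props:
  assumes "distinct s"
  shows "SC s \<in> comps (length s)" "des (SC s) = lrset s"
proof -
  let ?P = "\<lambda>us. concat us = s \<and> (\<forall>u\<in>set us. init_dom u) \<and> sorted_wrt (<) (map hd us)"
  have PG: "\<And>us. ?P us \<longleftrightarrow> concat us = s \<and> good us" by (auto simp: good_def)
  obtain us where us: "concat us = s" "good us" using good_exists assms by blast
  have "\<exists>!us. ?P us"
  proof (rule ex1I[of _ us])
    show "?P us" using us PG by blast
    fix vs assume "?P vs"
    then have vs: "concat vs = s" "good vs" using PG by auto
    have "map length vs = map length us"
      using des_inj[OF good_comps[OF vs(2)]] good_comps[OF us(2)] good_des[OF vs(2)] good_des[OF us(2)] vs(1) us(1)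
      by simp
    then show "vs = us" using concat_len_eq[of vs us] vs(1) us(1) by simp
  qed
  then have "?P (THE us. ?P us)" by (rule theI')
  moreover define t where "t = (THE us. ?P us)"
  ultimately have t: "concat t = s" "good t" using PG by auto
  have "SC s = map length t" by (simp add: SC_def t_def)
  then show "SC s \<in> comps (length s)" "des (SC s) = lrset s"
    using good_comps[OF t(2)] good_des[OF t(2)] t(1) by auto
qed

lemma perms_len: "s \<in> perms n \<Longrightarrow> length s = n"
  by (metis card_atLeastAtMost diff_Suc_1 distinct_card perms_def permutations_of_setD)

lemma perms_D: "s \<in> perms n \<Longrightarrow> set s = {1..n} \<and> distinct s \<and> length s = n"
  using perms_len by (simp add: perms_def permutations_of_set_def)

lemma SC_iff:
  assumes "s \<in> perms n" "J \<in> comps n" "n \<ge> 1"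
  shows "SC s = compl_comp n J \<longleftrightarrow> NLR s = des J"
proof -
  have s: "distinct s" "length s = n" using perms_D assms by auto
  have c: "compl_comp n J \<in> comps n" "des (compl_comp n J) = {1..<n} - des J"
    using comp_of_des[of "{1..<n} - des J" n] assms(3) by (auto simp: compl_comp_def)
  have sc: "SC s \<in> comps n" "des (SC s) = lrset s" using SC_props s by auto
  have dj: "des J \<subseteq> {1..<n}" using des_subset assms(2) by (auto simp: comps_iff)
  have "SC s = compl_comp n J \<longleftrightarrow> lrset s = {1..<n} - des J"
    using des_inj[OF sc(1) c(1)] sc c by auto
  also have "\<dots> \<longleftrightarrow> NLR s = des J"
    using lrset_sub[of s] dj s(2) unfolding NLR_def by auto
  finally show ?thesis .
qed

lemma RC_iff:
  assumes "K \<in> comps n" "n \<ge> 1"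
  shows "RC n s = K \<longleftrightarrow> RD n s = des K"
proof -
  have c: "RC n s \<in> comps n" "des (RC n s) = RD n s"
    using comp_of_des[OF RD_sub assms(2)] by (auto simp: RC_RD)
  then show ?thesis using des_inj[OF c(1) assms(1)] by auto
qed



definition pos :: "nat list \<Rightarrow> nat \<Rightarrow> nat" where
  "pos s v = (LEAST i. i < length s \<and> s!i = v)"

lemma pos_props: "v \<in> set s \<Longrightarrow> pos s v < length s \<and> s ! (pos s v) = v"
  unfolding pos_def by (rule LeastI_ex) (simp add: in_set_conv_nth)

lemma pos_nth: "distinct s \<Longrightarrow> i < length s \<Longrightarrow> pos s (s!i) = i"
  unfolding pos_def
  by (rule Least_equality) (auto simp: nth_eq_iff_index_eq leI)

lemma bef_pos:
  assumes "distinct s" "a \<in> set s" "b \<in> set s"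
  shows "bef s a b \<longleftrightarrow> pos s a < pos s b"
proof
  assume "bef s a b"
  then obtain j k where "j < k" "k < length s" "s!j = a" "s!k = b" by (auto simp: bef_def)
  then show "pos s a < pos s b" using pos_nth assms(1) by auto
next
  assume "pos s a < pos s b"
  then show "bef s a b" using pos_props assms unfolding bef_def by blast
qed

lemma pos_inj:
  assumes "a \<in> set s" "b \<in> set s" "pos s a = pos s b" shows "a = b"
  using pos_props assms by metis

lemma asc_exists:
  fixes f :: "nat \<Rightarrow> nat"
  shows "a < b \<Longrightarrow> f a < f b \<Longrightarrow> \<exists>v. a \<le> v \<and> v < b \<and> f v < f (Suc v)"
proof (induction b)
  case 0 then show ?case by simp
next
  case (Suc b)
  show ?case
  proof (cases "f b < f (Suc b)")
    case True then show ?thesis using Suc.prems by (intro exI[of _ b]) auto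
  next
    case False
    then have "a < b" using Suc.prems by (metis less_SucE)
    moreover have "f a < f b" using Suc.prems False by simp
    ultimately show ?thesis using Suc.IH by (meson less_SucI)
  qed
qed

lemma tri_count1:
  assumes s: "s \<in> perms n" and t: "t \<ge> 1"
  shows "card (RD n s \<inter> {t..}) \<le> card (NLR s \<inter> {t..})"
proof -
  have sp: "set s = {1..n}" "distinct s" "length s = n" using perms_D s by auto
  define T where "T = {t..<n}"
  define Asc where "Asc = {v \<in> T. pos s v < pos s (Suc v)}"
  define L where "L = lrset s \<inter> T"
  have e1: "RD n s \<inter> {t..} = T - Asc"
  proof (rule set_eqI)
    fix v
    show "v \<in> RD n s \<inter> {t..} \<longleftrightarrow> v \<in> T - Asc"
    proof (cases "v \<in> T")
      case True
      then have vs: "v \<in> set s" "Suc v \<in> set s" using sp t by (auto simp: T_def)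
      have "pos s v \<noteq> pos s (Suc v)" using pos_inj[OF vs] by auto
      then have "bef s (v+1) v \<longleftrightarrow> \<not> pos s v < pos s (Suc v)"
        using bef_pos[OF sp(2) vs(2) vs(1)] by auto
      then show ?thesis using True t by (auto simp: RD_def T_def Asc_def)
    next
      case False then show ?thesis by (auto simp: RD_def T_def)
    qed
  qed
  have e2: "NLR s \<inter> {t..} = T - L"
    using sp(3) t by (auto simp: NLR_def L_def T_def lrset_def)
  have fT: "finite T" by (simp add: T_def)
  have AT: "Asc \<subseteq> T" "L \<subseteq> T" by (auto simp: Asc_def L_def)
  define M where "M p = Max ((!) s ` {..<p})" for p
  define g where "g p = (SOME v. M p \<le> v \<and> v < s!p \<and> pos s v < pos s (Suc v))" for p
  have Mge: "\<And>p q. q < p \<Longrightarrow> s!q \<le> M p" unfolding M_def by (rule Max_ge) auto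
  have gp: "M p \<le> g p \<and> g p < s!p \<and> pos s (g p) < pos s (Suc (g p)) \<and> t \<le> M p" if p: "p \<in> L" for p
  proof -
    have pl: "p \<in> lrset s" "t \<le> p" "p < n" using p by (auto simp: L_def T_def)
    then have p1: "1 \<le> p" using t by simp
    have "0 \<in> {..<p}" using p1 by simp
    then have ne: "(!) s ` {..<p} \<noteq> {}" by blast
    then have "M p \<in> (!) s ` {..<p}" unfolding M_def by (intro Max_in) auto
    then obtain q where q: "q < p" "s!q = M p" by auto
    have "s!q < s!p" using pl q by (auto simp: lrset_def)
    moreover have "pos s (s!q) < pos s (s!p)"
      using pos_nth[OF sp(2), of q] pos_nth[OF sp(2), of p] sp(3) q pl by simp
    ultimately obtain v where "s!q \<le> v \<and> v < s!p \<and> pos s v < pos s (Suc v)"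
      using asc_exists[of "s!q" "s!p" "pos s"] by blast
    then have "M p \<le> g p \<and> g p < s!p \<and> pos s (g p) < pos s (Suc (g p))"
      unfolding g_def using q by (metis (mono_tags, lifting) someI_ex)
    moreover have "p \<le> M p"
    proof -
      have "card ((!) s ` {..<p}) = p"
        using pl sp by (subst card_image) (auto intro!: inj_on_nth)
      moreover have "(!) s ` {..<p} \<subseteq> {1..M p}"
      proof
        fix x assume x: "x \<in> (!) s ` {..<p}"
        then have "x \<in> set s" using pl sp by auto
        then have "1 \<le> x" using sp by auto
        moreover have "x \<le> M p" unfolding M_def using x by (intro Max_ge) auto
        ultimately show "x \<in> {1..M p}" by simp
      qed
      ultimately show ?thesis by (metis card_atLeastAtMost card_mono diff_Suc_1 finite_atLeastAtMost)
    qed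
    ultimately show ?thesis using pl by simp
  qed
  have sn: "\<And>p. p < n \<Longrightarrow> s!p \<le> n" using sp by (metis atLeastAtMost_iff nth_mem)
  have "inj_on g L"
  proof (rule linorder_inj_onI)
    fix p p' assume pp: "p < p'" "p \<in> L" "p' \<in> L"
    have "g p < s!p" using gp pp by blast
    also have "s!p \<le> M p'" using Mge pp by simp
    also have "M p' \<le> g p'" using gp pp by blast
    finally show "g p \<noteq> g p'" by simp
  qed auto
  moreover have "g ` L \<subseteq> Asc"
  proof
    fix x assume "x \<in> g ` L"
    then obtain p where p: "p \<in> L" "x = g p" by auto
    then have "p < n" by (auto simp: L_def T_def)
    then show "x \<in> Asc" using gp[OF p(1)] sn[of p] p by (auto simp: Asc_def T_def)
  qed
  ultimately have "card L \<le> card Asc"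
    using card_inj_on_le[of g L Asc] fT AT finite_subset[OF AT(1) fT] by blast
  moreover have "card (T - Asc) = card T - card Asc" "card (T - L) = card T - card L"
    using card_Diff_subset[OF finite_subset[OF AT(1) fT] AT(1)]
      card_Diff_subset[OF finite_subset[OF AT(2) fT] AT(2)] by auto
  ultimately show ?thesis using e1 e2 by simp
qed

lemma tri_count:
  assumes s: "s \<in> perms n"
  shows "card (RD n s \<inter> {t..}) \<le> card (NLR s \<inter> {t..})"
proof (cases "t = 0")
  case True
  have "RD n s \<inter> {t..} = RD n s \<inter> {1..}" "NLR s \<inter> {t..} = NLR s \<inter> {1..}"
    using True by (auto simp: RD_def NLR_def)
  then show ?thesis using tri_count1[OF s, of 1] by simp
next
  case False then show ?thesis using tri_count1[OF s, of t] by simp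
qed



lemma tri_hom:
  fixes M :: "'a \<Rightarrow> 'a \<Rightarrow> rat" and w :: "'a \<Rightarrow> nat"
  assumes fin: "finite C"
    and tri: "\<And>J K. J \<in> C \<Longrightarrow> K \<in> C \<Longrightarrow> M J K \<noteq> 0 \<Longrightarrow> w K < w J \<or> K = J"
    and dg: "\<And>J. J \<in> C \<Longrightarrow> M J J \<noteq> 0"
    and x0: "\<And>K. K \<notin> C \<Longrightarrow> x K = 0"
    and eq: "\<And>J. J \<in> C \<Longrightarrow> (\<Sum>K\<in>C. M J K * x K) = 0"
  shows "x K = 0"
proof (rule ccontr)
  assume "x K \<noteq> 0"
  then have "K \<in> C \<and> x K \<noteq> 0" using x0 by blast
  then obtain K0 where K0: "K0 \<in> C" "x K0 \<noteq> 0" and mn: "\<forall>y. y \<in> C \<and> x y \<noteq> 0 \<longrightarrow> w K0 \<le> w y"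
    using ex_has_least_nat[of "\<lambda>y. y \<in> C \<and> x y \<noteq> 0" K w] by blast
  have z: "M K0 K * x K = 0" if "K \<in> C - {K0}" for K
  proof (cases "x K = 0")
    case False
    then have "w K0 \<le> w K" using mn that by blast
    then have "M K0 K = 0" using tri[of K0 K] K0 that by fastforce
    then show ?thesis by simp
  qed simp
  have "(\<Sum>K\<in>C. M K0 K * x K) = M K0 K0 * x K0 + (\<Sum>K\<in>C - {K0}. M K0 K * x K)"
    using fin K0 by (simp add: sum.remove)
  also have "(\<Sum>K\<in>C - {K0}. M K0 K * x K) = 0" using z by (intro sum.neutral) blast
  finally have "M K0 K0 * x K0 = 0" using eq[OF K0(1)] by simp
  then show False using dg[OF K0(1)] K0(2) by simp
qed

lemma tri_ex:
  fixes M :: "'a \<Rightarrow> 'a \<Rightarrow> rat" and w :: "'a \<Rightarrow> nat"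
  assumes fin: "finite C"
  shows "(\<forall>J\<in>C. \<forall>K\<in>C. M J K \<noteq> 0 \<longrightarrow> w K < w J \<or> K = J) \<longrightarrow> (\<forall>J\<in>C. M J J \<noteq> 0) \<longrightarrow>
     (\<forall>b. \<exists>x. (\<forall>K. K \<notin> C \<longrightarrow> x K = 0) \<and> (\<forall>J\<in>C. (\<Sum>K\<in>C. M J K * x K) = b J))"
  using fin
proof (induction C rule: finite_ranking_induct[where f = w])
  case empty then show ?case by (intro impI allI exI[of _ "\<lambda>_. 0"]) simp
next
  case (insert a S)
  show ?case
  proof (intro impI allI)
    fix b
    assume tri: "\<forall>J\<in>insert a S. \<forall>K\<in>insert a S. M J K \<noteq> 0 \<longrightarrow> w K < w J \<or> K = J"
      and dg: "\<forall>J\<in>insert a S. M J J \<noteq> 0"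
    show "\<exists>x. (\<forall>K. K \<notin> insert a S \<longrightarrow> x K = 0) \<and> (\<forall>J\<in>insert a S. (\<Sum>K\<in>insert a S. M J K * x K) = b J)"
    proof (cases "a \<in> S")
      case True
      then show ?thesis using insert tri dg by (simp add: insert_absorb)
    next
      case False
      obtain x0 where x0: "\<forall>K. K \<notin> S \<longrightarrow> x0 K = 0" "\<forall>J\<in>S. (\<Sum>K\<in>S. M J K * x0 K) = b J"
        using insert.IH tri dg by blast
      define x1 where "x1 = x0(a := (b a - (\<Sum>K\<in>S. M a K * x0 K)) / M a a)"
      have sS: "(\<Sum>K\<in>S. M J K * x1 K) = (\<Sum>K\<in>S. M J K * x0 K)" for J
        using False by (intro sum.cong) (auto simp: x1_def)
      have Mz: "M J a = 0" if "J \<in> S" for J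
      proof (rule ccontr)
        assume "M J a \<noteq> 0"
        then have "w a < w J \<or> a = J" using tri that by blast
        then show False using insert.hyps(2)[OF that] False that by auto
      qed
      have "\<forall>K. K \<notin> insert a S \<longrightarrow> x1 K = 0" using x0 by (auto simp: x1_def)
      moreover have "\<forall>J\<in>insert a S. (\<Sum>K\<in>insert a S. M J K * x1 K) = b J"
      proof
        fix J assume J: "J \<in> insert a S"
        have "(\<Sum>K\<in>insert a S. M J K * x1 K) = M J a * x1 a + (\<Sum>K\<in>S. M J K * x0 K)"
          using insert.hyps(1) False sS by simp
        also have "\<dots> = b J"
        proof (cases "J = a")
          case True
          have "M a a \<noteq> 0" using dg by simp
          then show ?thesis using True by (simp add: x1_def field_simps)
        next
          case False2: False
          then have "J \<in> S" using J by simp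
          then show ?thesis using Mz x0 by simp
        qed
        finally show "(\<Sum>K\<in>insert a S. M J K * x1 K) = b J" .
      qed
      ultimately show ?thesis by blast
    qed
  qed
qed

lemma tri_ex1:
  fixes M :: "'a \<Rightarrow> 'a \<Rightarrow> rat" and w :: "'a \<Rightarrow> nat"
  assumes fin: "finite C"
    and tri: "\<And>J K. J \<in> C \<Longrightarrow> K \<in> C \<Longrightarrow> M J K \<noteq> 0 \<Longrightarrow> w K < w J \<or> K = J"
    and dg: "\<And>J. J \<in> C \<Longrightarrow> M J J \<noteq> 0"
  shows "\<exists>!x. (\<forall>K. K \<notin> C \<longrightarrow> x K = 0) \<and> (\<forall>J\<in>C. (\<Sum>K\<in>C. M J K * x K) = b J)"
proof -
  obtain x where x: "(\<forall>K. K \<notin> C \<longrightarrow> x K = 0) \<and> (\<forall>J\<in>C. (\<Sum>K\<in>C. M J K * x K) = b J)"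
    using tri_ex[OF fin, of M w] tri dg by blast
  show ?thesis
  proof (rule ex1I[of _ x])
    show "(\<forall>K. K \<notin> C \<longrightarrow> x K = 0) \<and> (\<forall>J\<in>C. (\<Sum>K\<in>C. M J K * x K) = b J)" by (rule x)
    fix y assume y: "(\<forall>K. K \<notin> C \<longrightarrow> y K = 0) \<and> (\<forall>J\<in>C. (\<Sum>K\<in>C. M J K * y K) = b J)"
    have "(\<lambda>K. y K - x K) K = 0" for K
    proof (rule tri_hom[OF fin tri dg])
      show "\<And>K. K \<notin> C \<Longrightarrow> y K - x K = 0" using x y by simp
      fix J assume J: "J \<in> C"
      have "(\<Sum>K\<in>C. M J K * (y K - x K)) = (\<Sum>K\<in>C. M J K * y K) - (\<Sum>K\<in>C. M J K * x K)"
        by (simp add: right_diff_distrib sum_subtractf)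
      then show "(\<Sum>K\<in>C. M J K * (y K - x K)) = 0" using x y J by simp
    qed auto
    then show "y = x" by auto
  qed
qed

lemma cnt_step: "finite (A :: nat set) \<Longrightarrow> card (A \<inter> {x..}) = card (A \<inter> {Suc x..}) + (if x \<in> A then 1 else 0)"
proof -
  assume f: "finite A"
  have e: "A \<inter> {x..} = (if x \<in> A then insert x (A \<inter> {Suc x..}) else A \<inter> {Suc x..})"
    by (auto simp: Suc_le_eq order.order_iff_strict)
  show ?thesis using f by (subst e) auto
qed

lemma cnt_eq:
  fixes A B :: "nat set"
  assumes "A \<subseteq> {1..<n}" "B \<subseteq> {1..<n}" "\<And>t. t \<le> n \<Longrightarrow> card (A \<inter> {t..}) = card (B \<inter> {t..})"
  shows "A = B"
proof (rule set_eqI)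
  fix x
  have fA1: "finite A" by (rule finite_subset[OF assms(1)]) simp
  have fA2: "finite B" by (rule finite_subset[OF assms(2)]) simp
  note fA = fA1 fA2
  show "x \<in> A \<longleftrightarrow> x \<in> B"
  proof (cases "x < n")
    case True
    then show ?thesis using cnt_step[OF fA(1), of x] cnt_step[OF fA(2), of x] assms(3)[of x] assms(3)[of "Suc x"]
      by (auto split: if_splits)
  next
    case False then show ?thesis using assms by auto
  qed
qed

definition wt :: "nat \<Rightarrow> nat list \<Rightarrow> nat" where
  "wt n I = (\<Sum>t\<in>{..n}. card (des I \<inter> {t..}))"

lemma U_val:
  assumes "J \<in> comps n" "K \<in> comps n" "n \<ge> 1"
  shows "U n J K = of_nat (card {s \<in> perms n. NLR s = des J \<and> RD n s = des K})"
proof -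
  have "{s \<in> perms n. SC s = compl_comp n J \<and> RC n s = K} = {s \<in> perms n. NLR s = des J \<and> RD n s = des K}"
    using SC_iff[OF _ assms(1,3)] RC_iff[OF assms(2,3)] by blast
  then show ?thesis by (simp add: U_def)
qed

lemma U_tri:
  assumes "J \<in> comps n" "K \<in> comps n" "n \<ge> 1" "U n J K \<noteq> 0"
  shows "wt n K < wt n J \<or> K = J"
proof -
  have "{s \<in> perms n. NLR s = des J \<and> RD n s = des K} \<noteq> {}"
    using assms U_val by fastforce
  then obtain s where s: "s \<in> perms n" "NLR s = des J" "RD n s = des K" by blast
  have le: "\<And>t. card (des K \<inter> {t..}) \<le> card (des J \<inter> {t..})"
    using tri_count[OF s(1)] s by simp
  show ?thesis
  proof (cases "wt n K < wt n J")
    case False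
    then have eq: "wt n K = wt n J" using le unfolding wt_def by (meson sum_mono antisym not_le)
    have "\<And>t. t \<le> n \<Longrightarrow> card (des K \<inter> {t..}) = card (des J \<inter> {t..})"
      using sum_mono_inv[OF eq[unfolded wt_def]] le by auto
    moreover have dK: "des K \<subseteq> {1..<n}" "des J \<subseteq> {1..<n}"
      using des_subset[of K] des_subset[of J] assms(1,2) by (auto simp: comps_iff)
    ultimately have "des K = des J"
      using cnt_eq[OF dK(1) dK(2)] by blast
    then show ?thesis using des_inj assms by blast
  qed simp
qed

lemma bef_append: "bef (xs @ ys) a b \<longleftrightarrow> bef xs a b \<or> bef ys a b \<or> (a \<in> set xs \<and> b \<in> set ys)"
proof
  assume "bef (xs @ ys) a b"
  then obtain j k where jk: "j < k" "k < length (xs @ ys)" "(xs @ ys)!j = a" "(xs @ ys)!k = b"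
    by (auto simp: bef_def)
  show "bef xs a b \<or> bef ys a b \<or> (a \<in> set xs \<and> b \<in> set ys)"
  proof (cases "k < length xs")
    case True then show ?thesis using jk unfolding bef_def by (auto simp: nth_append)
  next
    case False
    show ?thesis
    proof (cases "j < length xs")
      case True then show ?thesis using jk False by (auto simp: nth_append)
    next
      case False2: False
      have "bef ys a b" unfolding bef_def
        using jk False False2 by (intro exI[of _ "j - length xs"] exI[of _ "k - length xs"]) (auto simp: nth_append)
      then show ?thesis by simp
    qed
  qed
next
  assume "bef xs a b \<or> bef ys a b \<or> (a \<in> set xs \<and> b \<in> set ys)"
  then show "bef (xs @ ys) a b"
  proof (elim disjE)
    assume "bef xs a b"
    then obtain j k where "j < k" "k < length xs" "xs!j = a" "xs!k = b" by (auto simp: bef_def)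
    then show ?thesis unfolding bef_def
      by (intro exI[of _ j] exI[of _ k]) (auto simp: nth_append)
  next
    assume "bef ys a b"
    then obtain j k where "j < k" "k < length ys" "ys!j = a" "ys!k = b" by (auto simp: bef_def)
    then show ?thesis unfolding bef_def
      by (intro exI[of _ "length xs + j"] exI[of _ "length xs + k"]) (auto simp: nth_append)
  next
    assume "a \<in> set xs \<and> b \<in> set ys"
    then obtain j k where "j < length xs" "xs!j = a" "k < length ys" "ys!k = b" by (auto simp: in_set_conv_nth)
    then show ?thesis unfolding bef_def
      by (intro exI[of _ j] exI[of _ "length xs + k"]) (auto simp: nth_append)
  qed
qed

lemma bef_single[simp]: "\<not> bef [x] a b" by (auto simp: bef_def)

lemma bef_set: "bef xs a b \<Longrightarrow> a \<in> set xs \<and> b \<in> set xs"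
  by (auto simp: bef_def)

lemma bef_rev_upt: "bef (rev [lo..<hi]) a b \<longleftrightarrow> lo \<le> b \<and> b < a \<and> a < hi"
proof
  assume "bef (rev [lo..<hi]) a b"
  then obtain j k where jk: "j < k" "k < hi - lo" "rev [lo..<hi] ! j = a" "rev [lo..<hi] ! k = b"
    by (auto simp: bef_def)
  then have "a = hi - 1 - j" "b = hi - 1 - k" by (auto simp: rev_nth)
  then show "lo \<le> b \<and> b < a \<and> a < hi" using jk by auto
next
  assume h: "lo \<le> b \<and> b < a \<and> a < hi"
  show "bef (rev [lo..<hi]) a b" unfolding bef_def
    using h by (intro exI[of _ "hi - 1 - a"] exI[of _ "hi - 1 - b"]) (auto simp: rev_nth)
qed

lemma diag_exists:
  "0 \<notin> set C \<Longrightarrow> \<exists>s \<in> perms (sum_list C). lrset s = des C \<and> RD (sum_list C) s = {1..<sum_list C} - des C"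
proof (induction C rule: rev_induct)
  case Nil then show ?case by (auto simp: perms_def lrset_def RD_def)
next
  case (snoc c C)
  define m where "m = sum_list C"
  have c0: "c > 0" "0 \<notin> set C" using snoc.prems by auto
  then obtain s where s: "s \<in> perms m" "lrset s = des C" "RD m s = {1..<m} - des C"
    using snoc.IH m_def by auto
  have sp: "set s = {1..m}" "distinct s" "length s = m" using perms_D[OF s(1)] by auto
  define u where "u = rev [m+1..<m+c+1]"
  have idu: "init_dom u" "hd u = m + c"
    using c0 by (auto simp: u_def init_dom_def rev_nth hd_rev last_upt)
  have lu: "\<forall>a\<in>set s. a < hd u" using sp idu c0 by auto
  have sm: "s = [] \<longleftrightarrow> C = []"
  proof -
    have "s = [] \<longleftrightarrow> m = 0" using sp by auto
    also have "\<dots> \<longleftrightarrow> C = []" using c0(2) m_def by (cases C) auto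
    finally show ?thesis .
  qed
  have p: "s @ u \<in> perms (m + c)"
    using sp by (auto simp: perms_def permutations_of_set_def u_def)
  have l: "lrset (s @ u) = des (C @ [c])"
    using lrset_snoc_block[OF idu(1) lu] s(2) sm sp by (simp add: des_snoc m_def)
  have r: "RD (m + c) (s @ u) = {1..<m+c} - des (C @ [c])"
  proof (rule set_eqI)
    fix i
    have b: "bef (s @ u) (i+1) i \<longleftrightarrow> bef s (i+1) i \<or> (m+1 \<le> i \<and> i+1 < m+c+1)"
      using bef_append[of s u "i+1" i] bef_rev_upt[of "m+1" "m+c+1" "i+1" i] sp
      unfolding u_def by auto
    have bs: "bef s (i+1) i \<Longrightarrow> i + 1 \<le> m" using bef_set[of s "i+1" i] sp by auto
    have dC: "des C \<subseteq> {1..<m}" using des_subset c0 m_def by auto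
    show "i \<in> RD (m + c) (s @ u) \<longleftrightarrow> i \<in> {1..<m+c} - des (C @ [c])"
      using b bs s(3) dC sm unfolding RD_def by (auto simp: des_snoc m_def)
  qed
  show ?case using p l r by (auto simp: m_def)
qed

lemma U_diag:
  assumes "J \<in> comps n" "n \<ge> 1"
  shows "U n J J \<noteq> 0"
proof -
  have cc: "compl_comp n J \<in> comps n" "des (compl_comp n J) = {1..<n} - des J"
    using comp_of_des[of "{1..<n} - des J" n] assms(2) by (auto simp: compl_comp_def)
  obtain s where s: "s \<in> perms n" "lrset s = des (compl_comp n J)" "RD n s = {1..<n} - des (compl_comp n J)"
    using diag_exists[of "compl_comp n J"] cc(1) by (auto simp: comps_iff)
  have dJ: "des J \<subseteq> {1..<n}" using des_subset assms(1) by (auto simp: comps_iff)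
  have "NLR s = des J" "RD n s = des J"
    using s cc dJ perms_D[OF s(1)] by (auto simp: NLR_def)
  then have "s \<in> {s \<in> perms n. NLR s = des J \<and> RD n s = des J}" using s by simp
  moreover have "finite (perms n)" by (simp add: perms_def)
  ultimately have "card {s \<in> perms n. NLR s = des J \<and> RD n s = des J} \<noteq> 0" by auto
  then show ?thesis using U_val[OF assms(1) assms(1) assms(2)] by simp
qed



lemma lrset_map_Suc: "lrset (map Suc xs) = lrset xs"
proof (rule set_eqI)
  fix p
  show "p \<in> lrset (map Suc xs) \<longleftrightarrow> p \<in> lrset xs"
  proof (cases "p < length xs")
    case True
    then have "(\<forall>q<p. map Suc xs ! q < map Suc xs ! p) \<longleftrightarrow> (\<forall>q<p. xs ! q < xs ! p)" by auto
    then show ?thesis by (simp add: lrset_def)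
  qed (simp add: lrset_def)
qed

lemma bef_map_Suc: "bef (map Suc xs) (Suc a) (Suc b) = bef xs a b"
proof
  assume "bef (map Suc xs) (Suc a) (Suc b)"
  then obtain j k where "j < k" "k < length xs" "map Suc xs ! j = Suc a" "map Suc xs ! k = Suc b"
    by (auto simp: bef_def)
  then show "bef xs a b" unfolding bef_def by (intro exI[of _ j] exI[of _ k]) auto
next
  assume "bef xs a b"
  then obtain j k where "j < k" "k < length xs" "xs ! j = a" "xs ! k = b"
    by (auto simp: bef_def)
  then show "bef (map Suc xs) (Suc a) (Suc b)" unfolding bef_def by (intro exI[of _ j] exI[of _ k]) auto
qed

lemma lrset_snoc_small:
  assumes "xs \<noteq> []" "x < xs ! 0"
  shows "lrset (xs @ [x]) = lrset xs"
proof (rule set_eqI)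
  fix p
  show "p \<in> lrset (xs @ [x]) \<longleftrightarrow> p \<in> lrset xs"
  proof (cases "p < length xs")
    case True then show ?thesis by (auto simp: lrset_def nth_append)
  next
    case False
    have "p \<notin> lrset (xs @ [x])"
    proof
      assume p: "p \<in> lrset (xs @ [x])"
      then have "p = length xs" using False by (auto simp: lrset_def)
      then have "(xs @ [x]) ! 0 < (xs @ [x]) ! p" using p assms(1) by (auto simp: lrset_def)
      then show False using \<open>p = length xs\<close> assms by (simp add: nth_append)
    qed
    moreover have "p \<notin> lrset xs" using False by (auto simp: lrset_def)
    ultimately show ?thesis by simp
  qed
qed

lemma hook_exists:
  assumes "n \<ge> 1"
  shows "\<forall>D. D \<subseteq> {1..<n} \<longrightarrow> (\<exists>s\<in>perms n. RD n s = {1..card D} \<and> NLR s = D)"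
  using assms
proof (induction n rule: nat_induct_at_least)
  case base
  show ?case
  proof (intro allI impI)
    fix D :: "nat set" assume "D \<subseteq> {1..<1}"
    then have "D = {}" by auto
    moreover have "[1] \<in> perms 1" by (simp add: perms_def)
    moreover have "RD 1 [1] = {}" "NLR [1] = {}" by (auto simp: RD_def NLR_def)
    ultimately show "\<exists>s\<in>perms 1. RD 1 s = {1..card D} \<and> NLR s = D" by auto
  qed
next
  case (Suc n)
  show ?case
  proof (intro allI impI)
    fix D' :: "nat set" assume D': "D' \<subseteq> {1..<Suc n}"
    show "\<exists>s\<in>perms (Suc n). RD (Suc n) s = {1..card D'} \<and> NLR s = D'"
    proof (cases "n \<in> D'")
      case False
      have D: "D' \<subseteq> {1..<n}"
      proof
        fix x assume x: "x \<in> D'"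
        then have "x \<in> {1..<Suc n}" "x \<noteq> n" using D' False by auto
        then show "x \<in> {1..<n}" by auto
      qed
      then obtain s where s: "s \<in> perms n" "RD n s = {1..card D'}" "NLR s = D'" using Suc.IH by blast
      have sp: "set s = {1..n}" "distinct s" "length s = n" using perms_D[OF s(1)] by auto
      define s' where "s' = s @ [Suc n]"
      have p: "s' \<in> perms (Suc n)" using sp by (auto simp: s'_def perms_def permutations_of_set_def)
      have "lrset s' = lrset s \<union> {n}"
        using lrset_snoc_block[of "[Suc n]" s] sp Suc.hyps by (auto simp: s'_def init_dom_def)
      then have nl: "NLR s' = D'"
        using s(3) sp lrset_sub[of s] by (auto simp: NLR_def s'_def)
      have rd: "RD (Suc n) s' = RD n s"
      proof (rule set_eqI)
        fix i
        have "bef s' (i+1) i \<longleftrightarrow> bef s (i+1) i"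
          using bef_append[of s "[Suc n]" "i+1" i] sp by (auto simp: s'_def)
        moreover have "bef s (i+1) i \<Longrightarrow> i < n" using bef_set[of s "i+1" i] sp by auto
        ultimately show "i \<in> RD (Suc n) s' \<longleftrightarrow> i \<in> RD n s" by (auto simp: RD_def)
      qed
      show ?thesis using p nl rd s(2) by auto
    next
      case True
      define D where "D = D' - {n}"
      have D: "D \<subseteq> {1..<n}" using D' by (auto simp: D_def)
      then obtain s where s: "s \<in> perms n" "RD n s = {1..card D}" "NLR s = D" using Suc.IH by blast
      have sp: "set s = {1..n}" "distinct s" "length s = n" using perms_D[OF s(1)] by auto
      define k where "k = card D"
      have kn: "k < n"
      proof (rule ccontr)
        assume "\<not> k < n"
        then have "n \<in> RD n s" using s(2) Suc.hyps by (simp add: k_def)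
        then show False by (simp add: RD_def)
      qed
      define s' where "s' = map Suc s @ [1]"
      have p: "s' \<in> perms (Suc n)"
      proof -
        have "set s' = insert 1 (Suc ` {1..n})" using sp by (simp add: s'_def)
        also have "\<dots> = {1..Suc n}" by (auto simp: image_Suc_atLeastAtMost)
        finally have "set s' = {1..Suc n}" .
        moreover have "distinct s'" using sp by (auto simp: s'_def distinct_map)
        ultimately show ?thesis by (simp add: perms_def permutations_of_set_def)
      qed
      have "s \<noteq> []" using sp Suc.hyps by auto
      moreover have "1 \<le> s ! 0"
      proof -
        have "s ! 0 \<in> set s" using \<open>s \<noteq> []\<close> by simp
        then show ?thesis using sp by simp
      qed
      ultimately have "lrset s' = lrset s"
        using lrset_snoc_small[of "map Suc s" 1] lrset_map_Suc[of s] by (simp add: s'_def)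
      then have nl: "NLR s' = D'"
      proof -
        assume ls: "lrset s' = lrset s"
        show ?thesis
        proof (rule set_eqI)
          fix x
          have "x \<in> NLR s' \<longleftrightarrow> x \<in> {1..<Suc n} \<and> x \<notin> lrset s" using ls sp(3) by (simp add: NLR_def s'_def)
          also have "\<dots> \<longleftrightarrow> x \<in> D'"
            using s(3) D' True lrset_sub[of s] sp(3) unfolding NLR_def D_def by (cases "x = n") auto
          finally show "x \<in> NLR s' \<longleftrightarrow> x \<in> D'" .
        qed
      qed
      have rd: "RD (Suc n) s' = {1..Suc k}"
      proof (rule set_eqI)
        fix i
        show "i \<in> RD (Suc n) s' \<longleftrightarrow> i \<in> {1..Suc k}"
        proof (cases "i \<le> 1")
          case True
          have "Suc (Suc 0) \<in> set (map Suc s)" using sp Suc.hyps by auto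
          then have "i = 1 \<Longrightarrow> bef s' (i+1) i" using bef_append[of "map Suc s" "[1]" "Suc (Suc 0)" "Suc 0"] by (simp add: s'_def)
          then show ?thesis using True Suc.hyps by (auto simp: RD_def)
        next
          case False
          then obtain j where j: "i = Suc j" "j \<ge> 1" by (metis Suc_pred' not_le less_one not_less_eq_eq)
          have "bef s' (i+1) i \<longleftrightarrow> bef (map Suc s) (Suc (Suc j)) (Suc j)"
            using bef_append[of "map Suc s" "[1]" "i+1" i] j by (simp add: s'_def)
          also have "\<dots> \<longleftrightarrow> bef s (Suc j) j" by (rule bef_map_Suc)
          finally have "bef s' (i+1) i \<longleftrightarrow> bef s (Suc j) j" .
          moreover have "bef s (Suc j) j \<Longrightarrow> j < n" using bef_set[of s "Suc j" j] sp by auto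
          ultimately have "i \<in> RD (Suc n) s' \<longleftrightarrow> j \<in> RD n s" using j by (auto simp: RD_def)
          then show ?thesis using s(2) j kn by (auto simp: k_def)
        qed
      qed
      have "card D' = Suc k"
      proof -
        have "finite D'" by (rule finite_subset[OF D']) simp
        then have c: "Suc (card (D' - {n})) = card D'" by (rule card_Suc_Diff1[OF _ True])
        show ?thesis unfolding k_def D_def using c by (rule sym)
      qed
      then show ?thesis using p nl rd by auto
    qed
  qed
qed

lemma chain_dec:
  fixes f :: "nat \<Rightarrow> nat"
  assumes "\<And>i. a \<le> i \<Longrightarrow> i < b \<Longrightarrow> f (Suc i) < f i"
  shows "a \<le> u \<Longrightarrow> u < v \<Longrightarrow> v \<le> b \<Longrightarrow> f v < f u"
proof (induction v)
  case 0 then show ?case by simp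
next
  case (Suc v)
  show ?case
  proof (cases "u = v")
    case True then show ?thesis using assms Suc.prems by simp
  next
    case False
    then have "f v < f u" using Suc by simp
    moreover have "f (Suc v) < f v" using assms Suc.prems False by simp
    ultimately show ?thesis by simp
  qed
qed

lemma chain_inc:
  fixes f :: "nat \<Rightarrow> nat"
  assumes "\<And>i. a \<le> i \<Longrightarrow> i < b \<Longrightarrow> f i < f (Suc i)"
  shows "a \<le> u \<Longrightarrow> u < v \<Longrightarrow> v \<le> b \<Longrightarrow> f u < f v"
proof (induction v)
  case 0 then show ?case by simp
next
  case (Suc v)
  show ?case
  proof (cases "u = v")
    case True then show ?thesis using assms Suc.prems by simp
  next
    case False
    then have "f u < f v" using Suc by simp
    moreover have "f v < f (Suc v)" using assms Suc.prems False by simp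
    ultimately show ?thesis by simp
  qed
qed

lemma hook_struct:
  assumes s: "s \<in> perms n" and rd: "RD n s = {1..k}" and kn: "k < n"
  shows "card (NLR s) = k"
    "\<And>p. p < n \<Longrightarrow> s ! p = (if p \<in> NLR s then k + 1 - card {q \<in> NLR s. q \<le> p}
                              else k + card {q. q \<le> p \<and> q \<notin> NLR s})"
proof -
  have sp: "set s = {1..n}" "distinct s" "length s = n" using perms_D[OF s] by auto
  define P where "P = pos s"
  have Pp: "\<And>v. v \<in> {1..n} \<Longrightarrow> P v < n \<and> s ! (P v) = v"
  proof -
    fix v assume "v \<in> {1..n}"
    then have "v \<in> set s" using sp by simp
    then show "P v < n \<and> s ! (P v) = v" using pos_props[of v s] sp by (simp add: P_def)
  qed
  have Pn: "\<And>p. p < n \<Longrightarrow> P (s ! p) = p" using pos_nth[OF sp(2)] sp(3) by (simp add: P_def)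
  have sn: "\<And>p. p < n \<Longrightarrow> s ! p \<in> {1..n}"
  proof -
    fix p assume "p < n"
    then have "s ! p \<in> set s" using sp(3) by simp
    then show "s ! p \<in> {1..n}" by (simp only: sp(1)[symmetric])
  qed
  have step_dec: "P (Suc i) < P i" if i: "1 \<le> i" "i < k+1" for i
  proof -
    have "i \<in> RD n s" using rd i by simp
    then have b: "bef s (Suc i) i" by (simp add: RD_def)
    have "i \<in> set s" "Suc i \<in> set s" using sp(1) i kn by auto
    then show ?thesis using bef_pos[OF sp(2), of "Suc i" i] b by (simp add: P_def)
  qed
  have dec: "\<And>u v. 1 \<le> u \<Longrightarrow> u < v \<Longrightarrow> v \<le> k+1 \<Longrightarrow> P v < P u"
    using chain_dec[of 1 "k+1" P, OF step_dec] by blast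
  have step_inc: "P i < P (Suc i)" if i: "k+1 \<le> i" "i < n" for i
  proof -
    have "i \<notin> RD n s" using rd i by simp
    then have b: "\<not> bef s (Suc i) i" using i kn by (simp add: RD_def)
    have m: "i \<in> set s" "Suc i \<in> set s" using sp(1) i kn by auto
    then have "\<not> P (Suc i) < P i" using bef_pos[OF sp(2), of "Suc i" i] b by (simp add: P_def)
    moreover have "P (Suc i) \<noteq> P i" using pos_inj[OF m(2) m(1)] by (auto simp: P_def)
    ultimately show ?thesis by simp
  qed
  have inc: "\<And>u v. k+1 \<le> u \<Longrightarrow> u < v \<Longrightarrow> v \<le> n \<Longrightarrow> P u < P v"
    using chain_inc[of "k+1" n P, OF step_inc] by blast
  have s0: "s ! 0 = k + 1"
  proof -
    have x: "s ! 0 \<in> {1..n}" using sn kn by simp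
    have P0: "P (s ! 0) = 0" using Pn kn by simp
    show ?thesis
    proof (rule ccontr)
      assume ne: "s ! 0 \<noteq> k + 1"
      show False
      proof (cases "s ! 0 \<le> k")
        case True
        then have "P (k+1) < P (s ! 0)" using dec x by simp
        then show False using P0 by simp
      next
        case False
        then have "P (k+1) < P (s ! 0)" using inc x ne by simp
        then show False using P0 by simp
      qed
    qed
  qed
  have nlr: "\<And>p. p \<in> NLR s \<longleftrightarrow> 1 \<le> p \<and> p < n \<and> s ! p \<le> k"
  proof -
    fix p
    show "p \<in> NLR s \<longleftrightarrow> 1 \<le> p \<and> p < n \<and> s ! p \<le> k"
    proof (cases "1 \<le> p \<and> p < n")
      case True
      have "p \<in> lrset s \<longleftrightarrow> \<not> s ! p \<le> k"
      proof
        assume "p \<in> lrset s"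
        then have "s ! 0 < s ! p" using True by (auto simp: lrset_def)
        then show "\<not> s ! p \<le> k" using s0 by simp
      next
        assume big: "\<not> s ! p \<le> k"
        have "s ! p \<noteq> s ! 0" using nth_eq_iff_index_eq[OF sp(2), of p 0] True sp(3) by auto
        then have "s ! p \<noteq> k + 1" using s0 by simp
        then have big2: "k + 1 < s ! p" using big by simp
        have "\<forall>q<p. s ! q < s ! p"
        proof (intro allI impI)
          fix q assume q: "q < p"
          show "s ! q < s ! p"
          proof (rule ccontr)
            assume "\<not> s ! q < s ! p"
            moreover have "s ! q \<noteq> s ! p" using nth_eq_iff_index_eq[OF sp(2), of q p] q True sp(3) by auto
            ultimately have "s ! p < s ! q" by simp
            then have "P (s ! p) < P (s ! q)" using inc big2 sn[of q] q True by simp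
            then show False using Pn q True by simp
          qed
        qed
        then show "p \<in> lrset s" using True sp by (simp add: lrset_def)
      qed
      then show ?thesis using True sp by (auto simp: NLR_def)
    next
      case False then show ?thesis using sp by (auto simp: NLR_def)
    qed
  qed
  have fN: "finite (NLR s)" by (simp add: NLR_def)
  have "NLR s = {p \<in> {..<n}. s ! p \<in> {1..k}}"
  proof (rule set_eqI)
    fix p
    show "p \<in> NLR s \<longleftrightarrow> p \<in> {p \<in> {..<n}. s ! p \<in> {1..k}}"
    proof (cases "p < n")
      case True
      then show ?thesis using nlr[of p] s0 sn[of p] by (cases "p = 0") auto
    next
      case False then show ?thesis using nlr[of p] by auto
    qed
  qed
  moreover have "(!) s ` {p \<in> {..<n}. s ! p \<in> {1..k}} = {1..k}"
  proof
    show "(!) s ` {p \<in> {..<n}. s ! p \<in> {1..k}} \<subseteq> {1..k}" by auto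
    show "{1..k} \<subseteq> (!) s ` {p \<in> {..<n}. s ! p \<in> {1..k}}"
    proof
      fix v assume v: "v \<in> {1..k}"
      then have "P v < n \<and> s ! (P v) = v" using Pp kn by simp
      then show "v \<in> (!) s ` {p \<in> {..<n}. s ! p \<in> {1..k}}" using v by (auto intro!: image_eqI[of _ _ "P v"])
    qed
  qed
  moreover have "inj_on ((!) s) {p \<in> {..<n}. s ! p \<in> {1..k}}" using sp by (intro inj_on_nth) auto
  ultimately have "card (NLR s) = card {1..k}" by (metis card_image)
  then show "card (NLR s) = k" by simp
  fix p assume p: "p < n"
  show "s ! p = (if p \<in> NLR s then k + 1 - card {q \<in> NLR s. q \<le> p}
                              else k + card {q. q \<le> p \<and> q \<notin> NLR s})"
  proof (cases "p \<in> NLR s")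
    case True
    define v where "v = s ! p"
    have v: "1 \<le> v" "v \<le> k" using True nlr sn p by (auto simp: v_def)
    have "(!) s ` {q \<in> NLR s. q \<le> p} = {v..k}"
    proof
      show "(!) s ` {q \<in> NLR s. q \<le> p} \<subseteq> {v..k}"
      proof
        fix x assume "x \<in> (!) s ` {q \<in> NLR s. q \<le> p}"
        then obtain q where q: "q \<in> NLR s" "q \<le> p" "x = s ! q" by auto
        have qk: "s ! q \<le> k" "1 \<le> s ! q" "q < n" using q nlr sn by auto
        have "v \<le> s ! q"
        proof (rule ccontr)
          assume "\<not> v \<le> s ! q"
          then have "P v < P (s ! q)" using dec qk v by simp
          then show False using Pn qk p q by (simp add: v_def)
        qed
        then show "x \<in> {v..k}" using q qk by simp
      qed
      show "{v..k} \<subseteq> (!) s ` {q \<in> NLR s. q \<le> p}"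
      proof
        fix u assume u: "u \<in> {v..k}"
        have Pu: "P u < n" "s ! (P u) = u" using Pp u v kn by auto
        have "P u \<noteq> 0"
        proof
          assume "P u = 0"
          then have "u = s ! 0" using Pu(2) by simp
          then show False using s0 u by simp
        qed
        then have "P u \<in> NLR s" using nlr Pu u by simp
        moreover have "P u \<le> p"
        proof (cases "u = v")
          case True then show ?thesis using Pn p by (simp add: v_def)
        next
          case False
          then have "P u < P v" using dec u v by simp
          then show ?thesis using Pn p by (simp add: v_def)
        qed
        ultimately show "u \<in> (!) s ` {q \<in> NLR s. q \<le> p}" using Pu by (auto intro!: image_eqI[of _ _ "P u"])
      qed
    qed
    moreover have "inj_on ((!) s) {q \<in> NLR s. q \<le> p}" using sp p by (intro inj_on_nth) auto
    ultimately have "card {q \<in> NLR s. q \<le> p} = card {v..k}" by (metis card_image)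
    then have "card {q \<in> NLR s. q \<le> p} = k + 1 - v" by simp
    then show ?thesis using True v by (simp add: v_def)
  next
    case False
    define v where "v = s ! p"
    have v: "k + 1 \<le> v" "v \<le> n"
    proof -
      show "v \<le> n" using sn p by (simp add: v_def)
      show "k + 1 \<le> v"
      proof (cases "p = 0")
        case True then show ?thesis using s0 by (simp add: v_def)
      next
        case False2: False
        then show ?thesis using False nlr p by (simp add: v_def)
      qed
    qed
    have "(!) s ` {q. q \<le> p \<and> q \<notin> NLR s} = {k+1..v}"
    proof
      show "(!) s ` {q. q \<le> p \<and> q \<notin> NLR s} \<subseteq> {k+1..v}"
      proof
        fix x assume "x \<in> (!) s ` {q. q \<le> p \<and> q \<notin> NLR s}"
        then obtain q where q: "q \<le> p" "q \<notin> NLR s" "x = s ! q" by auto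
        have qn: "q < n" using q p by simp
        have qk: "k + 1 \<le> s ! q"
        proof (cases "q = 0")
          case True then show ?thesis using s0 by simp
        next
          case False then show ?thesis using q nlr qn by simp
        qed
        have "s ! q \<le> v"
        proof (rule ccontr)
          assume "\<not> s ! q \<le> v"
          then have "P v < P (s ! q)" using inc qk v sn[OF qn] by simp
          then show False using Pn qn p q by (simp add: v_def)
        qed
        then show "x \<in> {k+1..v}" using q qk by simp
      qed
      show "{k+1..v} \<subseteq> (!) s ` {q. q \<le> p \<and> q \<notin> NLR s}"
      proof
        fix u assume u: "u \<in> {k+1..v}"
        have Pu: "P u < n" "s ! (P u) = u" using Pp u v by auto
        have "P u \<notin> NLR s" using nlr Pu u by auto
        moreover have "P u \<le> p"
        proof (cases "u = v")
          case True then show ?thesis using Pn p by (simp add: v_def)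
        next
          case False
          then have "P u < P v" using inc u v by simp
          then show ?thesis using Pn p by (simp add: v_def)
        qed
        ultimately show "u \<in> (!) s ` {q. q \<le> p \<and> q \<notin> NLR s}" using Pu by (auto intro!: image_eqI[of _ _ "P u"])
      qed
    qed
    moreover have "inj_on ((!) s) {q. q \<le> p \<and> q \<notin> NLR s}" using sp p by (intro inj_on_nth) auto
    ultimately have "card {q. q \<le> p \<and> q \<notin> NLR s} = card {k+1..v}" by (metis card_image)
    then have "card {q. q \<le> p \<and> q \<notin> NLR s} = v - k" by simp
    then show ?thesis using False v by (simp add: v_def)
  qed
qed



lemma hook_card:
  assumes D: "D \<subseteq> {1..<n}" and kn: "k < n" and n: "n \<ge> 1"
  shows "card {s \<in> perms n. NLR s = D \<and> RD n s = {1..k}} = (if card D = k then 1 else 0)"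
proof (cases "card D = k")
  case True
  obtain s0 where s0: "s0 \<in> perms n" "RD n s0 = {1..card D}" "NLR s0 = D"
    using hook_exists[OF n] D by blast
  have "{s \<in> perms n. NLR s = D \<and> RD n s = {1..k}} = {s0}"
  proof (rule set_eqI, rule iffI)
    fix s assume "s \<in> {s \<in> perms n. NLR s = D \<and> RD n s = {1..k}}"
    then have s: "s \<in> perms n" "NLR s = D" "RD n s = {1..k}" by auto
    have "s = s0"
    proof (rule nth_equalityI)
      show "length s = length s0" using perms_len s(1) s0(1) by simp
      fix p assume "p < length s"
      then have p: "p < n" using perms_len s(1) by simp
      show "s ! p = s0 ! p"
        using hook_struct(2)[OF s(1) s(3) kn p] hook_struct(2)[OF s0(1) _ kn p] s0 s True by simp
    qed
    then show "s \<in> {s0}" by simp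
  next
    fix s assume "s \<in> {s0}"
    then show "s \<in> {s \<in> perms n. NLR s = D \<and> RD n s = {1..k}}" using s0 True by simp
  qed
  then show ?thesis using True by simp
next
  case False
  have E: "{s \<in> perms n. NLR s = D \<and> RD n s = {1..k}} = {}"
    using hook_struct(1)[OF _ _ kn] False by auto
  show ?thesis unfolding E using False by simp
qed

lemma pair_Psi:
  assumes J: "J \<in> comps n" and n: "n \<ge> 1"
  shows "pair n (U n J) (Psi n) = (-1) ^ (length J - 1)"
proof -
  let ?h = "\<lambda>k. replicate k 1 @ [n - k]"
  have dJ: "des J \<subseteq> {1..<n}" using des_subset J by (auto simp: comps_iff)
  have cJ: "card (des J) = length J - 1" using card_des J by (auto simp: comps_iff)
  have lJ: "length J \<le> n" using length_le_sum J by (auto simp: comps_iff)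
  have Uh: "U n J (?h k) = (if card (des J) = k then 1 else 0)" if k: "k < n" for k
  proof -
    have "des (?h k) = {1..k}" using des_hook k by simp
    then show ?thesis using U_val[OF J hook_comps[OF k] n] hook_card[OF dJ k n] by simp
  qed
  have "pair n (U n J) (Psi n) = (\<Sum>K\<in>comps n. \<Sum>k<n. U n J K * ((-1)^k * (if K = ?h k then 1 else 0)))"
    by (simp add: pair_def Psi_def sum_distrib_left)
  also have "\<dots> = (\<Sum>k<n. \<Sum>K\<in>comps n. U n J K * ((-1)^k * (if K = ?h k then 1 else 0)))"
    by (rule sum.swap)
  also have "\<dots> = (\<Sum>k<n. (-1)^k * U n J (?h k))"
  proof (rule sum.cong)
    fix k assume "k \<in> {..<n}"
    then have k: "k < n" by simp
    have "(\<Sum>K\<in>comps n. U n J K * ((-1)^k * (if K = ?h k then 1 else 0)))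
        = (\<Sum>K\<in>comps n. if K = ?h k then (-1)^k * U n J K else 0)"
      by (rule sum.cong) auto
    also have "\<dots> = (-1)^k * U n J (?h k)"
      using finite_comps hook_comps[OF k] by (simp add: sum.delta)
    finally show "(\<Sum>K\<in>comps n. U n J K * ((-1)^k * (if K = ?h k then 1 else 0))) = (-1)^k * U n J (?h k)" .
  qed simp
  also have "\<dots> = (\<Sum>k<n. if k = card (des J) then (-1)^(card (des J)) else 0)"
  proof (rule sum.cong)
    fix k assume "k \<in> {..<n}"
    then show "(-1)^k * U n J (?h k) = (if k = card (des J) then (-1)^(card (des J)) else 0)"
      using Uh[of k] by auto
  qed simp
  also have "\<dots> = (-1) ^ (card (des J))"
    using cJ lJ n by (simp add: sum.delta')
  finally show ?thesis using cJ by simp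
qed

lemma ex1_eq: "\<exists>!x. P x \<Longrightarrow> P a \<Longrightarrow> P b \<Longrightarrow> a = b" by blast

theorem mainTheorem9:
  fixes n :: nat
  assumes "n \<ge> 1"
  shows "Psi n = (\<lambda>K. \<Sum>I\<in>comps n. (-1) ^ (length I - 1) * V n I K)"
proof -
  have fin: "finite (comps n)" by (rule finite_comps)
  have tri: "\<And>J K. J \<in> comps n \<Longrightarrow> K \<in> comps n \<Longrightarrow> U n J K \<noteq> 0 \<Longrightarrow> wt n K < wt n J \<or> K = J"
    using U_tri assms by blast
  have dg: "\<And>J. J \<in> comps n \<Longrightarrow> U n J J \<noteq> 0" using U_diag assms by blast
  have ex: "\<exists>!v. (\<forall>K. K \<notin> comps n \<longrightarrow> v K = 0) \<and> (\<forall>J\<in>comps n. pair n (U n J) v = b J)" for b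
    using tri_ex1[OF fin tri dg, where b=b] unfolding pair_def .
  have Vp: "(\<forall>K. K \<notin> comps n \<longrightarrow> V n I K = 0) \<and> (\<forall>J\<in>comps n. pair n (U n J) (V n I) = (if J = I then 1 else 0))" for I
    unfolding V_def by (rule theI'[OF ex])
  define c where "c J = ((-1) ^ (length J - 1) :: rat)" for J :: "nat list"
  define R where "R = (\<lambda>K. \<Sum>I\<in>comps n. (-1) ^ (length I - 1) * V n I K)"
  have PsiP: "(\<forall>K. K \<notin> comps n \<longrightarrow> Psi n K = 0) \<and> (\<forall>J\<in>comps n. pair n (U n J) (Psi n) = c J)"
  proof (intro conjI allI impI ballI)
    fix K assume K: "K \<notin> comps n"
    have "\<And>k. k < n \<Longrightarrow> K \<noteq> replicate k 1 @ [n - k]" using hook_comps K by blast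
    then show "Psi n K = 0" by (simp add: Psi_def)
  next
    fix J assume "J \<in> comps n"
    then show "pair n (U n J) (Psi n) = c J" using pair_Psi assms by (simp add: c_def)
  qed
  have RP: "(\<forall>K. K \<notin> comps n \<longrightarrow> R K = 0) \<and> (\<forall>J\<in>comps n. pair n (U n J) R = c J)"
  proof (intro conjI allI impI ballI)
    fix K assume K: "K \<notin> comps n"
    then show "R K = 0" using Vp by (simp add: R_def)
  next
    fix J assume J: "J \<in> comps n"
    have "pair n (U n J) R = (\<Sum>K\<in>comps n. \<Sum>I\<in>comps n. U n J K * ((-1) ^ (length I - 1) * V n I K))"
      by (simp add: pair_def R_def sum_distrib_left)
    also have "\<dots> = (\<Sum>I\<in>comps n. \<Sum>K\<in>comps n. U n J K * ((-1) ^ (length I - 1) * V n I K))"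
      by (rule sum.swap)
    also have "\<dots> = (\<Sum>I\<in>comps n. (-1) ^ (length I - 1) * pair n (U n J) (V n I))"
      by (simp add: pair_def sum_distrib_left mult.left_commute)
    also have "\<dots> = (\<Sum>I\<in>comps n. if I = J then (-1) ^ (length I - 1) else 0)"
      using Vp J by (intro sum.cong) auto
    also have "\<dots> = c J" using fin J by (simp add: c_def sum.delta')
    finally show "pair n (U n J) R = c J" .
  qed
  have "Psi n = R"
    by (rule ex1_eq[where P = "\<lambda>v. (\<forall>K. K \<notin> comps n \<longrightarrow> v K = 0) \<and> (\<forall>J\<in>comps n. pair n (U n J) v = c J)", OF ex PsiP RP])
  then show ?thesis by (simp add: R_def)
qed


end
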